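(* Let $T>0$, $\omega_p=\frac{\pi}{2T}$, $\omega_c>0$, $A_u>0$, $\tau\in\mathbb{R}$ and $\varphi_c\in\mathbb{R}$, and let $(\beta^I_m)_{m\in\mathbb{Z}},(\beta^Q_m)_{m\in\mathbb{Z}}$ be sequences in $\{-1,+1\}$. Define $$b_I(t)=\sum_{m=-\infty}^{\infty}\beta^I_m\,\Pi\!\left(\frac{t-2mT}{2T}\right),\qquad b_Q(t)=\sum_{m=-\infty}^{\infty}\beta^Q_m\,\Pi\!\left(\frac{t-(2m+1)T}{2T}\right),$$ where $\Pi(x)=1$ for $|x|<\tfrac12$, $\Pi(x)=\tfrac12$ for $|x|=\tfrac12$, $\Pi(x)=0$ for $|x|>\tfrac12$, and the interfering MSK signal $$u(t)=b_I(t-\tau)\cos\omega_p(t-\tau)\cos(\omega_c t+\varphi_c)+b_Q(t-\tau)\sin\omega_p(t-\tau)\sin(\omega_c t+\varphi_c).$$ Let $\phi_I(t)=\frac{2}{T}\cos\omega_p t\cos\omega_c t$, and for $k\in\mathbb{Z}$ let $$\Lambda^I_u(k)=\int_{(2k-1)T}^{(2k+1)T}\mathrm{LP}\big[A_u\,u(t)\,\phi_I(t)\big]\,dt,$$ where $\mathrm{LP}$ denotes ideal low-pass filtering that discards all components at carrier frequency $2\omega_c$ (i.e., after expanding the product by product-to-sum identities, all terms containing $\cos(2\omega_c t+\cdot)$ or $\sin(2\omega_c t+\cdot)$ are dropped). Set $\varphi_p=\omega_p\tau$, $k'=k-\lfloor \tau/2T\rfloor$, $\underline{\tau}=\tau-2\lfloor\tau/2T\rfloor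 T\in[0,2T)$, $k^{Q\prime}=k-\lfloor(\tau+T)/2T\rfloor$, and $\underline{\tau^Q}=\tau+T-2\lfloor(\tau+T)/2T\rfloor T\in[0,2T)$. Then $$\Lambda^I_u(k)=\frac{A_u}{2T}\Big\{\cos\varphi_c\Big[\cos\varphi_p\big(\underline{\tau}\,\beta^I_{k'-1}+(2T-\underline{\tau})\,\beta^I_{k'}\big)-\frac{2T}{\pi}\sin\varphi_p\big(\beta^I_{k'-1}-\beta^I_{k'}\big)\Big]$$ $$\qquad-\sin\varphi_c\Big[\sin\varphi_p\big(\underline{\tau^Q}\,\beta^Q_{k^{Q\prime}-1}+(2T-\underline{\tau^Q})\,\beta^Q_{k^{Q\prime}}\big)+\frac{2T}{\pi}\cos\varphi_p\big(\beta^Q_{k^{Q\prime}-1}-\beta^Q_{k^{Q\prime}}\big)\Big]\Big\}.$$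
   Context: This is the contribution of an interfering, minimum-shift-keying (MSK) modulated signal to the in-phase soft-bit decision variable of a matched-filter MSK demodulator synchronized to a different signal. $2T$ is the bit duration, $\omega_c$ the carrier angular frequency, $\tau$ the time offset of the interferer (positive means delayed), $\varphi_c$ its carrier phase offset, $A_u$ its received amplitude, and $\beta^I_m,\beta^Q_m$ its in-phase and quadrature information bits; the quadrature bit stream is staggered by $T$ relative to the in-phase one. *)

theory Defs
  imports "HOL-Analysis.Analysis"
begin

definition rect :: "real \<Rightarrow> real" where
  "rect x = (if \<bar>x\<bar> < 1/2 then 1 else if \<bar>x\<bar> = 1/2 then 1/2 else 0)"

definition bI :: "real \<Rightarrow> (int \<Rightarrow> real) \<Rightarrow> real \<Rightarrow> real" where
  "bI T \<beta> t = (\<Sum>\<^sub>\<infinity>m::int. \<beta> m * rect ((t - 2 * of_int m * T) / (2 * T)))"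

definition bQ :: "real \<Rightarrow> (int \<Rightarrow> real) \<Rightarrow> real \<Rightarrow> real" where
  "bQ T \<beta> t = (\<Sum>\<^sub>\<infinity>m::int. \<beta> m * rect ((t - (2 * of_int m + 1) * T) / (2 * T)))"

definition msk_u :: "real \<Rightarrow> real \<Rightarrow> real \<Rightarrow> real \<Rightarrow> real \<Rightarrow> (int \<Rightarrow> real) \<Rightarrow> (int \<Rightarrow> real) \<Rightarrow> real \<Rightarrow> real" where
  "msk_u T wp wc \<tau> \<phi>c \<beta>I \<beta>Q t =
     bI T \<beta>I (t - \<tau>) * cos (wp * (t - \<tau>)) * cos (wc * t + \<phi>c)
   + bQ T \<beta>Q (t - \<tau>) * sin (wp * (t - \<tau>)) * sin (wc * t + \<phi>c)"

definition phiI :: "real \<Rightarrow> real \<Rightarrow> real \<Rightarrow> real \<Rightarrow> real" where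
  "phiI T wp wc t = 2 / T * cos (wp * t) * cos (wc * t)"

text \<open>Product-to-sum expansion of A_u u(t) phi_I(t):
  cos(wc t + pc) cos(wc t) = (cos(2 wc t + pc) + cos pc)/2 and
  sin(wc t + pc) cos(wc t) = (sin(2 wc t + pc) + sin pc)/2.
  The components at 2 wc are collected in prod_hf, the rest in prod_lp.
  The ideal low-pass filter LP keeps exactly prod_lp.\<close>
definition prod_lp :: "real \<Rightarrow> real \<Rightarrow> real \<Rightarrow> real \<Rightarrow> real \<Rightarrow> real \<Rightarrow> (int \<Rightarrow> real) \<Rightarrow> (int \<Rightarrow> real) \<Rightarrow> real \<Rightarrow> real" where
  "prod_lp Au T wp wc \<tau> \<phi>c \<beta>I \<beta>Q t =
     Au * (2 / T) * cos (wp * t) *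
       (bI T \<beta>I (t - \<tau>) * cos (wp * (t - \<tau>)) * (cos \<phi>c / 2)
      + bQ T \<beta>Q (t - \<tau>) * sin (wp * (t - \<tau>)) * (sin \<phi>c / 2))"

definition prod_hf :: "real \<Rightarrow> real \<Rightarrow> real \<Rightarrow> real \<Rightarrow> real \<Rightarrow> real \<Rightarrow> (int \<Rightarrow> real) \<Rightarrow> (int \<Rightarrow> real) \<Rightarrow> real \<Rightarrow> real" where
  "prod_hf Au T wp wc \<tau> \<phi>c \<beta>I \<beta>Q t =
     Au * (2 / T) * cos (wp * t) *
       (bI T \<beta>I (t - \<tau>) * cos (wp * (t - \<tau>)) * (cos (2 * wc * t + \<phi>c) / 2)
      + bQ T \<beta>Q (t - \<tau>) * sin (wp * (t - \<tau>)) * (sin (2 * wc * t + \<phi>c) / 2))"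

lemma prod_split:
  "Au * msk_u T wp wc \<tau> \<phi>c \<beta>I \<beta>Q t * phiI T wp wc t
   = prod_lp Au T wp wc \<tau> \<phi>c \<beta>I \<beta>Q t + prod_hf Au T wp wc \<tau> \<phi>c \<beta>I \<beta>Q t"
proof -
  have c0: "\<And>a b::real. cos b * cos a = (cos (a + b) + cos (b - a)) / 2"
    by (simp add: cos_add cos_diff)
  have s0: "\<And>a b::real. sin b * cos a = (sin (a + b) + sin (b - a)) / 2"
    by (simp add: sin_add sin_diff)
  have e1: "wc * t + (wc * t + \<phi>c) = 2 * wc * t + \<phi>c" by simp
  have e2: "(wc * t + \<phi>c) - wc * t = \<phi>c" by simp
  have c: "cos (wc * t + \<phi>c) * cos (wc * t) = (cos (2 * wc * t + \<phi>c) + cos \<phi>c) / 2"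
    using c0[where a="wc * t" and b="wc * t + \<phi>c"] by (simp only: e1 e2)
  have s: "sin (wc * t + \<phi>c) * cos (wc * t) = (sin (2 * wc * t + \<phi>c) + sin \<phi>c) / 2"
    using s0[where a="wc * t" and b="wc * t + \<phi>c"] by (simp only: e1 e2)
  show ?thesis
    unfolding msk_u_def phiI_def prod_lp_def prod_hf_def
  proof -
    define C where "C = cos (wc * t + \<phi>c)"
    define S where "S = sin (wc * t + \<phi>c)"
    define c0 where "c0 = cos (wc * t)"
    define C2 where "C2 = cos (2 * wc * t + \<phi>c)"
    define S2 where "S2 = sin (2 * wc * t + \<phi>c)"
    define x where "x = bI T \<beta>I (t - \<tau>) * cos (wp * (t - \<tau>))"
    define y where "y = bQ T \<beta>Q (t - \<tau>) * sin (wp * (t - \<tau>))"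
    define q where "q = 2 / T * cos (wp * t)"
    have cc: "C * c0 = (C2 + cos \<phi>c) / 2" using c by (simp add: C_def c0_def C2_def)
    have ss: "S * c0 = (S2 + sin \<phi>c) / 2" using s by (simp add: S_def c0_def S2_def)
    have "Au * (x * C + y * S) * (q * c0) = Au * q * (x * (C * c0) + y * (S * c0))"
      by (simp add: algebra_simps)
    also have "\<dots> = Au * q * (x * (cos \<phi>c / 2) + y * (sin \<phi>c / 2))
                    + Au * q * (x * (C2 / 2) + y * (S2 / 2))"
      unfolding cc ss by (simp add: algebra_simps add_divide_distrib)
    finally have "Au * (x * C + y * S) * (q * c0) = Au * q * (x * (cos \<phi>c / 2) + y * (sin \<phi>c / 2))
                    + Au * q * (x * (C2 / 2) + y * (S2 / 2))" .
    then show "Au * (bI T \<beta>I (t - \<tau>) * cos (wp * (t - \<tau>)) * cos (wc * t + \<phi>c) +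
           bQ T \<beta>Q (t - \<tau>) * sin (wp * (t - \<tau>)) * sin (wc * t + \<phi>c)) *
          (2 / T * cos (wp * t) * cos (wc * t)) =
    Au * (2 / T) * cos (wp * t) *
    (bI T \<beta>I (t - \<tau>) * cos (wp * (t - \<tau>)) * (cos \<phi>c / 2) +
     bQ T \<beta>Q (t - \<tau>) * sin (wp * (t - \<tau>)) * (sin \<phi>c / 2)) +
    Au * (2 / T) * cos (wp * t) *
    (bI T \<beta>I (t - \<tau>) * cos (wp * (t - \<tau>)) * (cos (2 * wc * t + \<phi>c) / 2) +
     bQ T \<beta>Q (t - \<tau>) * sin (wp * (t - \<tau>)) * (sin (2 * wc * t + \<phi>c) / 2))"
      unfolding C_def S_def c0_def C2_def S2_def x_def y_def q_def
      by (simp add: mult.assoc)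
  qed
qed

definition LambdaI :: "real \<Rightarrow> real \<Rightarrow> real \<Rightarrow> real \<Rightarrow> real \<Rightarrow> real \<Rightarrow> (int \<Rightarrow> real) \<Rightarrow> (int \<Rightarrow> real) \<Rightarrow> int \<Rightarrow> real" where
  "LambdaI Au T wp wc \<tau> \<phi>c \<beta>I \<beta>Q k =
     integral {(2 * of_int k - 1) * T .. (2 * of_int k + 1) * T}
       (prod_lp Au T wp wc \<tau> \<phi>c \<beta>I \<beta>Q)"

end

theory Submission
  imports Defs
begin

lemma bI_eval:
  assumes T: "T > 0" and x: "2 * of_int m * T - T < x" "x < 2 * of_int m * T + T"
  shows "bI T \<beta> x = \<beta> m"
proof -
  have z: "\<beta> m' * rect ((x - 2 * of_int m' * T) / (2 * T)) = 0" if "m' \<noteq> m" for m'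
  proof -
    have "\<bar>x - 2 * of_int m' * T\<bar> > T"
    proof (cases "m' < m")
      case True
      then have "of_int m' \<le> (of_int m :: real) - 1" by linarith
      then have "2 * of_int m' * T \<le> 2 * (of_int m - 1) * T" using T by simp
      then show ?thesis using x by (simp add: algebra_simps)
    next
      case False
      then have "of_int m' \<ge> (of_int m :: real) + 1" using that by linarith
      then have "2 * of_int m' * T \<ge> 2 * (of_int m + 1) * T" using T by simp
      then show ?thesis using x by (simp add: algebra_simps)
    qed
    then have "\<bar>(x - 2 * of_int m' * T) / (2 * T)\<bar> > 1/2" using T by (simp add: abs_divide)
    then have g: "\<not> \<bar>(x - 2 * of_int m' * T) / (2 * T)\<bar> < 1/2" "\<not> \<bar>(x - 2 * of_int m' * T) / (2 * T)\<bar> = 1/2" by linarith+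
    then show ?thesis by (simp only: rect_def g if_False mult_zero_right)
  qed
  have r: "rect ((x - 2 * of_int m * T) / (2 * T)) = 1"
  proof -
    have "\<bar>x - 2 * of_int m * T\<bar> < T" using x by auto
    then have "\<bar>(x - 2 * of_int m * T) / (2 * T)\<bar> < 1/2" using T by (simp add: abs_divide)
    then show ?thesis by (simp only: rect_def if_True)
  qed
  have "bI T \<beta> x = (\<Sum>\<^sub>\<infinity>m'\<in>{m}. \<beta> m' * rect ((x - 2 * of_int m' * T) / (2 * T)))"
    unfolding bI_def by (rule infsum_cong_neutral) (auto simp: z)
  then show ?thesis using r by simp
qed

lemma bQ_eval:
  assumes T: "T > 0" and x: "2 * of_int m * T < x" "x < 2 * of_int m * T + 2 * T"
  shows "bQ T \<beta> x = \<beta> m"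
proof -
  have z: "\<beta> m' * rect ((x - (2 * of_int m' + 1) * T) / (2 * T)) = 0" if "m' \<noteq> m" for m'
  proof -
    have "\<bar>x - (2 * of_int m' + 1) * T\<bar> > T"
    proof (cases "m' < m")
      case True
      then have "of_int m' \<le> (of_int m :: real) - 1" by linarith
      then have "2 * of_int m' * T \<le> 2 * (of_int m - 1) * T" using T by simp
      then show ?thesis using x by (simp add: algebra_simps)
    next
      case False
      then have "of_int m' \<ge> (of_int m :: real) + 1" using that by linarith
      then have "2 * of_int m' * T \<ge> 2 * (of_int m + 1) * T" using T by simp
      then show ?thesis using x by (simp add: algebra_simps)
    qed
    then have "\<bar>(x - (2 * of_int m' + 1) * T) / (2 * T)\<bar> > 1/2" using T by (simp add: abs_divide)
    then have g: "\<not> \<bar>(x - (2 * of_int m' + 1) * T) / (2 * T)\<bar> < 1/2" "\<not> \<bar>(x - (2 * of_int m' + 1) * T) / (2 * T)\<bar> = 1/2" by linarith+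
    then show ?thesis by (simp only: rect_def g if_False mult_zero_right)
  qed
  have r: "rect ((x - (2 * of_int m + 1) * T) / (2 * T)) = 1"
  proof -
    have "\<bar>x - (2 * of_int m + 1) * T\<bar> < T" using x by (auto simp: algebra_simps)
    then have "\<bar>(x - (2 * of_int m + 1) * T) / (2 * T)\<bar> < 1/2" using T by (simp add: abs_divide)
    then show ?thesis by (simp only: rect_def if_True)
  qed
  have "bQ T \<beta> x = (\<Sum>\<^sub>\<infinity>m'\<in>{m}. \<beta> m' * rect ((x - (2 * of_int m' + 1) * T) / (2 * T)))"
    unfolding bQ_def by (rule infsum_cong_neutral) (auto simp: z)
  then show ?thesis using r by simp
qed

lemma step_int:
  fixes a b c p q :: real
  assumes "a \<le> c" "c \<le> b"
    and D: "\<And>t. (F has_real_derivative f t) (at t)"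
    and h: "\<And>t. t \<in> {a..b} - {a, b, c} \<Longrightarrow> h t = (if t < c then p else q) * f t"
  shows "(h has_integral (p * (F c - F a) + q * (F b - F c))) {a..b}"
proof -
  have ftc: "(f has_integral (F y - F x)) {x..y}" if "x \<le> y" for x y
    using that by (intro fundamental_theorem_of_calculus)
      (auto simp: has_real_derivative_iff_has_vector_derivative[symmetric]
        intro: has_field_derivative_at_within D)
  have 1: "(h has_integral (p * (F c - F a))) {a..c}"
    by (rule has_integral_spike_finite[of "{a, c}" _ _ "\<lambda>t. p * f t"])
      (use assms in \<open>auto intro: has_integral_mult_right ftc\<close>)
  have 2: "(h has_integral (q * (F b - F c))) {c..b}"
    by (rule has_integral_spike_finite[of "{c, b}" _ _ "\<lambda>t. q * f t"])
      (use assms in \<open>auto intro: has_integral_mult_right ftc\<close>)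
  show ?thesis by (rule has_integral_combine[OF assms(1,2) 1 2])
qed

theorem theorem1:
  fixes T wp wc Au \<tau> \<phi>c :: real and \<beta>I \<beta>Q :: "int \<Rightarrow> real" and k :: int
  assumes "T > 0" and "wp = pi / (2 * T)" and "wc > 0" and "Au > 0"
    and "\<And>m. \<beta>I m \<in> {-1, 1}" and "\<And>m. \<beta>Q m \<in> {-1, 1}"
  shows "let \<phi>p = wp * \<tau>;
             k' = k - \<lfloor>\<tau> / (2 * T)\<rfloor>;
             t' = \<tau> - 2 * of_int \<lfloor>\<tau> / (2 * T)\<rfloor> * T;
             kQ = k - \<lfloor>(\<tau> + T) / (2 * T)\<rfloor>;
             tQ = \<tau> + T - 2 * of_int \<lfloor>(\<tau> + T) / (2 * T)\<rfloor> * T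
         in LambdaI Au T wp wc \<tau> \<phi>c \<beta>I \<beta>Q k =
            Au / (2 * T) *
              (cos \<phi>c * (cos \<phi>p * (t' * \<beta>I (k' - 1) + (2 * T - t') * \<beta>I k')
                          - 2 * T / pi * sin \<phi>p * (\<beta>I (k' - 1) - \<beta>I k'))
             - sin \<phi>c * (sin \<phi>p * (tQ * \<beta>Q (kQ - 1) + (2 * T - tQ) * \<beta>Q kQ)
                          + 2 * T / pi * cos \<phi>p * (\<beta>Q (kQ - 1) - \<beta>Q kQ)))"
proof -
  note T = assms(1) and wp = assms(2)
  define \<phi>p where "\<phi>p = wp * \<tau>"
  define n where "n = \<lfloor>\<tau> / (2 * T)\<rfloor>"
  define nQ where "nQ = \<lfloor>(\<tau> + T) / (2 * T)\<rfloor>"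
  define t' where "t' = \<tau> - 2 * of_int n * T"
  define tQ where "tQ = \<tau> + T - 2 * of_int nQ * T"
  define a where "a = (2 * of_int k - 1) * T"
  define b where "b = (2 * of_int k + 1) * T"
  have wp0: "wp > 0" using T wp by simp
  have t'r: "0 \<le> t'" "t' < 2 * T"
  proof -
    have "of_int n \<le> \<tau> / (2 * T)" "\<tau> / (2 * T) < of_int n + 1" unfolding n_def by linarith+
    then show "0 \<le> t'" "t' < 2 * T" unfolding t'_def using T by (simp_all add: field_simps)
  qed
  have tQr: "0 \<le> tQ" "tQ < 2 * T"
  proof -
    have "of_int nQ \<le> (\<tau> + T) / (2 * T)" "(\<tau> + T) / (2 * T) < of_int nQ + 1" unfolding nQ_def by linarith+
    then show "0 \<le> tQ" "tQ < 2 * T" unfolding tQ_def using T by (simp_all add: field_simps)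
  qed
  define fI where "fI t = cos (wp * t) * cos (wp * (t - \<tau>))" for t
  define fQ where "fQ t = cos (wp * t) * sin (wp * (t - \<tau>))" for t
  define FI where "FI t = sin (wp * (2 * t - \<tau>)) / (4 * wp) + t * cos \<phi>p / 2" for t
  define FQ where "FQ t = - cos (wp * (2 * t - \<tau>)) / (4 * wp) - t * sin \<phi>p / 2" for t
  have DI: "(FI has_real_derivative fI t) (at t)" for t
  proof -
    have "(FI has_real_derivative (cos (wp * (2 * t - \<tau>)) * (wp * 2) / (4 * wp) + cos \<phi>p / 2)) (at t)"
      unfolding FI_def by (auto intro!: derivative_eq_intros)
    moreover have "cos (wp * (2 * t - \<tau>)) * (wp * 2) / (4 * wp) + cos \<phi>p / 2 = fI t"
    proof -
      have e: "wp * (2 * t - \<tau>) = wp * t + wp * (t - \<tau>)" "\<phi>p = wp * t - wp * (t - \<tau>)"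
        by (simp_all add: \<phi>p_def algebra_simps)
      show ?thesis unfolding fI_def e cos_add cos_diff using wp0 by (simp add: field_simps)
    qed
    ultimately show ?thesis by simp
  qed
  have DQ: "(FQ has_real_derivative fQ t) (at t)" for t
  proof -
    have "(FQ has_real_derivative (sin (wp * (2 * t - \<tau>)) * (wp * 2) / (4 * wp) - sin \<phi>p / 2)) (at t)"
      unfolding FQ_def by (auto intro!: derivative_eq_intros)
    moreover have "sin (wp * (2 * t - \<tau>)) * (wp * 2) / (4 * wp) - sin \<phi>p / 2 = fQ t"
    proof -
      have e: "wp * (2 * t - \<tau>) = wp * (t - \<tau>) + wp * t" "\<phi>p = wp * t - wp * (t - \<tau>)"
        by (simp_all add: \<phi>p_def algebra_simps)
      show ?thesis unfolding fQ_def e sin_add sin_diff using wp0 by (simp add: field_simps)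
    qed
    ultimately show ?thesis by simp
  qed
  define c where "c = a + t'"
  define cQ where "cQ = a + tQ"
  have tt: "\<tau> = t' + 2 * of_int n * T" "\<tau> = tQ - T + 2 * of_int nQ * T" by (simp_all add: t'_def tQ_def)
  have ab: "a = 2 * of_int k * T - T" "b = 2 * of_int k * T + T" by (simp_all add: a_def b_def algebra_simps)
  define hI where "hI t = bI T \<beta>I (t - \<tau>) * fI t" for t
  define hQ where "hQ t = bQ T \<beta>Q (t - \<tau>) * fQ t" for t
  have iI: "(hI has_integral (\<beta>I (k - n - 1) * (FI c - FI a) + \<beta>I (k - n) * (FI b - FI c))) {a..b}"
  proof (rule step_int[OF _ _ DI])
    show "a \<le> c" "c \<le> b" using t'r T by (simp_all add: c_def ab)
    fix t assume t: "t \<in> {a..b} - {a, b, c}"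
    show "hI t = (if t < c then \<beta>I (k - n - 1) else \<beta>I (k - n)) * fI t"
    proof (cases "t < c")
      case True
      have "bI T \<beta>I (t - \<tau>) = \<beta>I (k - n - 1)"
        by (rule bI_eval[OF T]) (use t True t'r in \<open>auto simp: c_def ab tt(1) algebra_simps\<close>)
      then show ?thesis using True by (simp add: hI_def)
    next
      case False
      have "bI T \<beta>I (t - \<tau>) = \<beta>I (k - n)"
        by (rule bI_eval[OF T]) (use t False t'r in \<open>auto simp: c_def ab tt(1) algebra_simps\<close>)
      then show ?thesis using False by (simp add: hI_def)
    qed
  qed
  have iQ: "(hQ has_integral (\<beta>Q (k - nQ - 1) * (FQ cQ - FQ a) + \<beta>Q (k - nQ) * (FQ b - FQ cQ))) {a..b}"
  proof (rule step_int[OF _ _ DQ])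
    show "a \<le> cQ" "cQ \<le> b" using tQr T by (simp_all add: cQ_def ab)
    fix t assume t: "t \<in> {a..b} - {a, b, cQ}"
    show "hQ t = (if t < cQ then \<beta>Q (k - nQ - 1) else \<beta>Q (k - nQ)) * fQ t"
    proof (cases "t < cQ")
      case True
      have "bQ T \<beta>Q (t - \<tau>) = \<beta>Q (k - nQ - 1)"
        by (rule bQ_eval[OF T]) (use t True tQr in \<open>auto simp: cQ_def ab tt(2) algebra_simps\<close>)
      then show ?thesis using True by (simp add: hQ_def)
    next
      case False
      have "bQ T \<beta>Q (t - \<tau>) = \<beta>Q (k - nQ)"
        by (rule bQ_eval[OF T]) (use t False tQr in \<open>auto simp: cQ_def ab tt(2) algebra_simps\<close>)
      then show ?thesis using False by (simp add: hQ_def)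
    qed
  qed
  have pl: "prod_lp Au T wp wc \<tau> \<phi>c \<beta>I \<beta>Q = (\<lambda>t. (Au / T * cos \<phi>c) * hI t + (Au / T * sin \<phi>c) * hQ t)"
    using T by (intro ext) (simp add: prod_lp_def hI_def hQ_def fI_def fQ_def field_simps)
  have L: "LambdaI Au T wp wc \<tau> \<phi>c \<beta>I \<beta>Q k =
     (Au / T * cos \<phi>c) * (\<beta>I (k - n - 1) * (FI c - FI a) + \<beta>I (k - n) * (FI b - FI c))
   + (Au / T * sin \<phi>c) * (\<beta>Q (k - nQ - 1) * (FQ cQ - FQ a) + \<beta>Q (k - nQ) * (FQ b - FQ cQ))"
    unfolding LambdaI_def pl a_def[symmetric] b_def[symmetric]
    by (intro integral_unique has_integral_add has_integral_mult_right iI iQ)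
  have wT: "wp * T = pi / 2" using T wp by simp
  have ea: "wp * (2 * a - \<tau>) = pi * of_int (2 * k - 1) - \<phi>p"
    unfolding a_def \<phi>p_def using T by (simp add: wp field_simps)
  have eb: "wp * (2 * b - \<tau>) = pi * of_int (2 * k + 1) - \<phi>p"
    unfolding b_def \<phi>p_def using T by (simp add: wp field_simps)
  have ec: "wp * (2 * c - \<tau>) = pi * of_int (2 * k - 1 - 2 * n) + \<phi>p"
    unfolding c_def a_def \<phi>p_def t'_def using T by (simp add: wp field_simps)
  have ecQ: "wp * (2 * cQ - \<tau>) = pi * of_int (2 * k - 2 * nQ) + \<phi>p"
    unfolding cQ_def a_def \<phi>p_def tQ_def using T by (simp add: wp field_simps)
  have o1: "cos (pi * of_int (2 * k - 1)) = -1" using cos_npi_int[of "2*k-1"] by simp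
  have o2: "cos (pi * of_int (2 * k + 1)) = -1" using cos_npi_int[of "2*k+1"] by simp
  have o3: "cos (pi * of_int (2 * k - 1 - 2 * n)) = -1" using cos_npi_int[of "2*k-1-2*n"] by simp
  have o4: "cos (pi * of_int (2 * k - 2 * nQ)) = 1" using cos_npi_int[of "2*k-2*nQ"] by simp
  have sa: "sin (wp * (2 * a - \<tau>)) = sin \<phi>p" "cos (wp * (2 * a - \<tau>)) = - cos \<phi>p"
    unfolding ea sin_diff cos_diff o1 sin_npi_int by simp_all
  have sb: "sin (wp * (2 * b - \<tau>)) = sin \<phi>p" "cos (wp * (2 * b - \<tau>)) = - cos \<phi>p"
    unfolding eb sin_diff cos_diff o2 sin_npi_int by simp_all
  have sc: "sin (wp * (2 * c - \<tau>)) = - sin \<phi>p"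
    unfolding ec sin_add o3 sin_npi_int by simp
  have scQ: "cos (wp * (2 * cQ - \<tau>)) = cos \<phi>p"
    unfolding ecQ cos_add o4 sin_npi_int by simp
  have bc: "b - c = 2 * T - t'" "c - a = t'" "b - cQ = 2 * T - tQ" "cQ - a = tQ"
    by (simp_all add: c_def cQ_def ab)
  have w4: "1 / (4 * wp) = T / (2 * pi)" using T wp by simp
  have FId: "FI x - FI y = (sin (wp * (2 * x - \<tau>)) - sin (wp * (2 * y - \<tau>))) * (1 / (4 * wp)) + (x - y) * cos \<phi>p / 2" for x y
    unfolding FI_def by (simp add: algebra_simps diff_divide_distrib)
  have FQd: "FQ x - FQ y = (cos (wp * (2 * y - \<tau>)) - cos (wp * (2 * x - \<tau>))) * (1 / (4 * wp)) - (x - y) * sin \<phi>p / 2" for x y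
    unfolding FQ_def by (simp add: algebra_simps diff_divide_distrib)
  have FIab: "FI c - FI a = - T / pi * sin \<phi>p + t' * cos \<phi>p / 2"
    "FI b - FI c = T / pi * sin \<phi>p + (2 * T - t') * cos \<phi>p / 2"
    unfolding FId sa sb sc w4 bc by (simp_all add: field_simps)
  have FQab: "FQ cQ - FQ a = - T / pi * cos \<phi>p - tQ * sin \<phi>p / 2"
    "FQ b - FQ cQ = T / pi * cos \<phi>p - (2 * T - tQ) * sin \<phi>p / 2"
    unfolding FQd sa sb scQ w4 bc by (simp_all add: field_simps)
  show ?thesis
    unfolding Let_def L FIab FQab \<phi>p_def[symmetric] n_def[symmetric] nQ_def[symmetric]
      t'_def[symmetric] tQ_def[symmetric]
    using T by (simp add: field_simps)
qed
end
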